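(* Let $\alpha\in(0,1)$, $p\in(0,1]$, $\rho\in(0,1)$, $m=\lfloor\alpha n\rfloor$, let $B$ be an $n\times(n-m)$ matrix with i.i.d. $\mathcal N(0,1)$ entries, and fix $T\subseteq\{1,\dots,n\}$ with $|T|=\rho n$ and a sign pattern $\sigma\in\{-1,+1\}^T$. For $\mathbf z\in\mathcal S$ let $T^-(\mathbf z)=\{i\in T:(B\mathbf z)_i\sigma_i<0\}$. There exist constants $\tilde\lambda_{\max}(\alpha,p,\rho)>0$ and $c_{15}>0$ such that for all sufficiently large $n$, with probability at least $1-e^{-c_{15}n}$, $\|B_{T^-(\mathbf z)}\mathbf z\|_p^p<\rho\,\tilde\lambda_{\max}(\alpha,p,\rho)\,n$ for every $\mathbf z\in\mathcal S$.
   Context: $\mathcal S$ is the unit Euclidean sphere in $\mathbb R^{n-m}$; $B_S$ is the submatrix of rows of $B$ indexed by $S$; $\|\mathbf v\|_p^p=\sum_i|v_i|^p$. *)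

theory Defs
  imports "HOL-Probability.Probability"
begin

definition gaussian_matrix :: "nat \<Rightarrow> nat \<Rightarrow> (nat \<times> nat \<Rightarrow> real) measure" where
  "gaussian_matrix n k = PiM ({..<n} \<times> {..<k}) (\<lambda>_. density lborel std_normal_density)"

definition mat_vec :: "(nat \<times> nat \<Rightarrow> real) \<Rightarrow> nat \<Rightarrow> (nat \<Rightarrow> real) \<Rightarrow> nat \<Rightarrow> real" where
  "mat_vec B k z i = (\<Sum>j<k. B (i, j) * z j)"

definition unit_sphere :: "nat \<Rightarrow> (nat \<Rightarrow> real) set" where
  "unit_sphere k = {z. (\<forall>j\<ge>k. z j = 0) \<and> (\<Sum>j<k. (z j)\<^sup>2) = 1}"

definition T_minus :: "(nat \<times> nat \<Rightarrow> real) \<Rightarrow> nat \<Rightarrow> nat set \<Rightarrow> (nat \<Rightarrow> real) \<Rightarrow> (nat \<Rightarrow> real) \<Rightarrow> nat set" where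
  "T_minus B k T \<sigma> z = {i \<in> T. mat_vec B k z i * \<sigma> i < 0}"

end

theory Submission
  imports Defs
begin


abbreviation "NN \<equiv> density lborel (\<lambda>x. ennreal (std_normal_density x))"

lemma gauss_mgf:
  "(\<integral>\<^sup>+ y. ennreal (exp (c * y)) \<partial>NN) = ennreal (exp (c\<^sup>2 / 2))"
proof -
  have eq: "std_normal_density y * exp (c * y) = exp (c\<^sup>2/2) * normal_density c 1 y" for y
  proof -
    have "exp (- y\<^sup>2 / 2) * exp (c * y) = exp (c\<^sup>2/2) * exp (-(y - c)\<^sup>2 / 2)"
    proof -
      have "- y\<^sup>2 / 2 + c * y = c\<^sup>2/2 + (-(y - c)\<^sup>2 / 2)"
        by (simp add: power2_eq_square field_simps)
      then show ?thesis by (simp add: exp_add[symmetric])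
    qed
    then show ?thesis unfolding normal_density_def by simp
  qed
  have "(\<integral>\<^sup>+ y. ennreal (exp (c * y)) \<partial>NN)
      = (\<integral>\<^sup>+ y. ennreal (std_normal_density y) * ennreal (exp (c * y)) \<partial>lborel)"
    by (rule nn_integral_density) auto
  also have "\<dots> = (\<integral>\<^sup>+ y. ennreal (exp (c\<^sup>2/2)) * ennreal (normal_density c 1 y) \<partial>lborel)"
    by (intro nn_integral_cong) (simp add: ennreal_mult'[symmetric] eq normal_density_nonneg)
  also have "\<dots> = ennreal (exp (c\<^sup>2/2)) * (\<integral>\<^sup>+ y. ennreal (normal_density c 1 y) \<partial>lborel)"
    by (rule nn_integral_cmult) auto
  also have "(\<integral>\<^sup>+ y. ennreal (normal_density c 1 y) \<partial>lborel) = 1"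
  proof -
    interpret prob_space "density lborel (normal_density c 1)" by (rule prob_space_normal_density) simp
    have "emeasure (density lborel (normal_density c 1)) UNIV = 1" using emeasure_space_1 by simp
    then show ?thesis by (simp add: emeasure_density)
  qed
  finally show ?thesis by simp
qed

lemma prob_NN: "prob_space NN" by (rule prob_space_normal_density) simp

lemma prob_G: "prob_space (gaussian_matrix n k)"
  unfolding gaussian_matrix_def by (intro prob_space_PiM prob_NN)

lemma gauss_tail:
  fixes a :: "nat \<times> nat \<Rightarrow> real" and l t :: real
  assumes l: "l \<ge> 0"
  shows "emeasure (gaussian_matrix n k) {B \<in> space (gaussian_matrix n k). t \<le> (\<Sum>x\<in>{..<n}\<times>{..<k}. a x * B x)}
     \<le> ennreal (exp (- l * t + l\<^sup>2 * (\<Sum>x\<in>{..<n}\<times>{..<k}. (a x)\<^sup>2) / 2))"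
proof -
  let ?I = "{..<n}\<times>{..<k}"
  let ?M = "gaussian_matrix n k"
  interpret P: product_prob_space "\<lambda>_. NN" by (intro product_prob_spaceI prob_NN)
  have M: "?M = PiM ?I (\<lambda>_. NN)" by (simp add: gaussian_matrix_def)
  let ?A = "{B \<in> space ?M. t \<le> (\<Sum>x\<in>?I. a x * B x)}"
  have A: "?A \<in> sets ?M" unfolding M by measurable
  have "emeasure ?M ?A = (\<integral>\<^sup>+ B. indicator ?A B \<partial>?M)"
    using A by simp
  also have "\<dots> \<le> (\<integral>\<^sup>+ B. ennreal (exp (- l * t)) * (\<Prod>x\<in>?I. ennreal (exp (l * a x * B x))) \<partial>?M)"
  proof (intro nn_integral_mono)
    fix B assume "B \<in> space ?M"
    have "(\<Prod>x\<in>?I. ennreal (exp (l * a x * B x))) = ennreal (exp (\<Sum>x\<in>?I. l * a x * B x))"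
      by (simp add: prod_ennreal exp_sum)
    moreover have "(\<Sum>x\<in>?I. l * a x * B x) = l * (\<Sum>x\<in>?I. a x * B x)"
      by (simp add: sum_distrib_left mult.assoc)
    moreover have "indicator ?A B \<le> ennreal (exp (- l * t) * exp (l * (\<Sum>x\<in>?I. a x * B x)))"
    proof (cases "B \<in> ?A")
      case True
      then have "l * t \<le> l * (\<Sum>x\<in>?I. a x * B x)" using l by (simp add: mult_left_mono)
      then have "1 \<le> exp (- l * t) * exp (l * (\<Sum>x\<in>?I. a x * B x))"
        by (simp add: exp_add[symmetric])
      then show ?thesis using True by simp
    qed simp
    ultimately show "indicator ?A B \<le> ennreal (exp (- l * t)) * (\<Prod>x\<in>?I. ennreal (exp (l * a x * B x)))"
      by (simp add: ennreal_mult)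
  qed
  also have "\<dots> = ennreal (exp (- l * t)) * (\<integral>\<^sup>+ B. (\<Prod>x\<in>?I. ennreal (exp (l * a x * B x))) \<partial>?M)"
    unfolding M by (rule nn_integral_cmult) measurable
  also have "(\<integral>\<^sup>+ B. (\<Prod>x\<in>?I. ennreal (exp (l * a x * B x))) \<partial>?M)
      = (\<Prod>x\<in>?I. \<integral>\<^sup>+ y. ennreal (exp ((l * a x) * y)) \<partial>NN)"
    unfolding M by (rule P.product_nn_integral_prod) auto
  also have "\<dots> = (\<Prod>x\<in>?I. ennreal (exp ((l * a x)\<^sup>2 / 2)))"
    by (simp add: gauss_mgf)
  also have "\<dots> = ennreal (exp (\<Sum>x\<in>?I. (l * a x)\<^sup>2 / 2))"
    by (simp add: prod_ennreal exp_sum)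
  also have "(\<Sum>x\<in>?I. (l * a x)\<^sup>2 / 2) = l\<^sup>2 * (\<Sum>x\<in>?I. (a x)\<^sup>2) / 2"
    by (simp add: sum_distrib_left sum_divide_distrib power_mult_distrib)
  finally show ?thesis by (simp add: ennreal_mult[symmetric] exp_add[symmetric])
qed


definition Q :: "(nat \<times> nat \<Rightarrow> real) \<Rightarrow> nat \<Rightarrow> nat \<Rightarrow> (nat \<Rightarrow> real) \<Rightarrow> (nat \<Rightarrow> real) \<Rightarrow> real" where
  "Q B n k u w = (\<Sum>i<n. \<Sum>j<k. B (i,j) * u i * w j)"

definition nrm :: "nat \<Rightarrow> (nat \<Rightarrow> real) \<Rightarrow> real" where
  "nrm d u = sqrt (\<Sum>i<d. (u i)\<^sup>2)"

lemma Q_diff_left: "Q B n k (\<lambda>i. u i - v i) w = Q B n k u w - Q B n k v w"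
  by (simp add: Q_def sum_subtractf[symmetric] algebra_simps)

lemma Q_diff_right: "Q B n k u (\<lambda>j. w j - v j) = Q B n k u w - Q B n k u v"
  by (simp add: Q_def sum_subtractf[symmetric] algebra_simps)

lemma Q_scale: "Q B n k (\<lambda>i. a * u i) (\<lambda>j. b * w j) = a * b * Q B n k u w"
  by (simp add: Q_def sum_distrib_left algebra_simps)

lemma Q_zero_left: "(\<Sum>i<n. (u i)\<^sup>2) = 0 \<Longrightarrow> Q B n k u w = 0"
proof -
  assume "(\<Sum>i<n. (u i)\<^sup>2) = 0"
  then have "\<forall>i\<in>{..<n}. (u i)\<^sup>2 = 0" by (subst sum_nonneg_eq_0_iff[symmetric]) auto
  then show ?thesis by (simp add: Q_def)
qed

lemma Q_zero_right: "(\<Sum>j<k. (w j)\<^sup>2) = 0 \<Longrightarrow> Q B n k u w = 0"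
proof -
  assume "(\<Sum>j<k. (w j)\<^sup>2) = 0"
  then have "\<forall>j\<in>{..<k}. (w j)\<^sup>2 = 0" by (subst sum_nonneg_eq_0_iff[symmetric]) auto
  then show ?thesis by (simp add: Q_def)
qed

lemma coord_le1: "(\<Sum>i<(n::nat). (u i)\<^sup>2) \<le> (1::real) \<Longrightarrow> i < n \<Longrightarrow> \<bar>u i\<bar> \<le> 1"
proof -
  assume a: "(\<Sum>i<n. (u i)\<^sup>2) \<le> 1" "i < n"
  have "(u i)\<^sup>2 \<le> (\<Sum>i<n. (u i)\<^sup>2)" by (rule member_le_sum) (use a(2) in auto)
  then have "(u i)\<^sup>2 \<le> 1" using a by simp
  then show ?thesis by (simp add: abs_square_le_1)
qed

definition SS where "SS B n k = {Q B n k u w | u w. (\<Sum>i<n. (u i)\<^sup>2) \<le> 1 \<and> (\<Sum>j<k. (w j)\<^sup>2) \<le> 1}"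

lemma SS_bdd: "bdd_above (SS B n k)"
proof (rule bdd_aboveI)
  fix s assume "s \<in> SS B n k"
  then obtain u w where s: "s = Q B n k u w" and u: "(\<Sum>i<n. (u i)\<^sup>2) \<le> 1" and w: "(\<Sum>j<k. (w j)\<^sup>2) \<le> 1"
    unfolding SS_def by blast
  have "Q B n k u w \<le> (\<Sum>i<n. \<Sum>j<k. \<bar>B (i,j)\<bar>)"
    unfolding Q_def
  proof (intro sum_mono)
    fix i j assume i: "i \<in> {..<n}" and j: "j \<in> {..<k}"
    have "\<bar>u i\<bar> \<le> 1" "\<bar>w j\<bar> \<le> 1" using coord_le1[OF u] coord_le1[OF w] i j by auto
    then have "\<bar>u i * w j\<bar> \<le> 1" by (simp add: abs_mult mult_le_one)
    then have "\<bar>B (i,j)\<bar> * \<bar>u i * w j\<bar> \<le> \<bar>B (i,j)\<bar>" by (simp add: mult_left_le)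
    then show "B (i, j) * u i * w j \<le> \<bar>B (i, j)\<bar>"
      by (metis abs_ge_self abs_mult mult.assoc order_trans)
  qed
  then show "s \<le> (\<Sum>i<n. \<Sum>j<k. \<bar>B (i,j)\<bar>)" using s by simp
qed

lemma SS_zero: "0 \<in> SS B n k"
  unfolding SS_def by (rule CollectI, rule exI[of _ "\<lambda>_. 0"], rule exI[of _ "\<lambda>_. 0"]) (simp add: Q_def)

lemma SS_nonneg: "0 \<le> Sup (SS B n k)"
  using SS_zero SS_bdd by (rule cSup_upper)

lemma Q_hom: "Q B n k u w \<le> Sup (SS B n k) * nrm n u * nrm k w"
proof -
  let ?M = "Sup (SS B n k)"
  let ?a = "nrm n u" and ?b = "nrm k w"
  have M0: "0 \<le> ?M" by (rule SS_nonneg)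
  show ?thesis
  proof (cases "(\<Sum>i<n. (u i)\<^sup>2) = 0 \<or> (\<Sum>j<k. (w j)\<^sup>2) = 0")
    case True
    then have "Q B n k u w = 0" using Q_zero_left Q_zero_right by blast
    then show ?thesis using M0 by (simp add: nrm_def mult_nonneg_nonneg sum_nonneg)
  next
    case False
    have su: "(\<Sum>i<n. (u i)\<^sup>2) > 0" using False by (metis less_eq_real_def sum_nonneg zero_le_power2)
    have sw: "(\<Sum>j<k. (w j)\<^sup>2) > 0" using False by (metis less_eq_real_def sum_nonneg zero_le_power2)
    have a: "?a > 0" "?a\<^sup>2 = (\<Sum>i<n. (u i)\<^sup>2)" using su by (auto simp: nrm_def)
    have b: "?b > 0" "?b\<^sup>2 = (\<Sum>j<k. (w j)\<^sup>2)" using sw by (auto simp: nrm_def)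
    have "(\<Sum>i<n. ((1/?a) * u i)\<^sup>2) = (\<Sum>i<n. (u i)\<^sup>2) / ?a\<^sup>2"
      by (simp add: power_mult_distrib sum_divide_distrib power_divide)
    then have u1: "(\<Sum>i<n. ((1/?a) * u i)\<^sup>2) = 1" using a su by simp
    have "(\<Sum>j<k. ((1/?b) * w j)\<^sup>2) = (\<Sum>j<k. (w j)\<^sup>2) / ?b\<^sup>2"
      by (simp add: power_mult_distrib sum_divide_distrib power_divide)
    then have w1: "(\<Sum>j<k. ((1/?b) * w j)\<^sup>2) = 1" using b sw by simp
    have "Q B n k (\<lambda>i. (1/?a) * u i) (\<lambda>j. (1/?b) * w j) \<in> SS B n k"
      unfolding SS_def using u1 w1 by fastforce
    then have "Q B n k (\<lambda>i. (1/?a) * u i) (\<lambda>j. (1/?b) * w j) \<le> ?M"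
      using SS_bdd by (rule cSup_upper)
    then have "(1/?a) * (1/?b) * Q B n k u w \<le> ?M" by (simp only: Q_scale)
    then show ?thesis using a b by (simp add: field_simps)
  qed
qed

lemma nrm_le: "(\<Sum>i<d. (u i)\<^sup>2) \<le> c\<^sup>2 \<Longrightarrow> 0 \<le> c \<Longrightarrow> nrm d u \<le> c"
  unfolding nrm_def by (metis real_sqrt_abs real_sqrt_le_mono abs_of_nonneg)

lemma det_main:
  assumes t: "t \<ge> 0"
  and net: "\<And>u w. (\<Sum>i<n. (u i)\<^sup>2) \<le> 1 \<Longrightarrow> (\<Sum>j<k. (w j)\<^sup>2) \<le> 1 \<Longrightarrow>
     \<exists>u' w'. (\<Sum>i<n. (u i - u' i)\<^sup>2) \<le> 1/36 \<and> (\<Sum>i<n. (u' i)\<^sup>2) \<le> 4 \<and>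
             (\<Sum>j<k. (w j - w' j)\<^sup>2) \<le> 1/36 \<and> Q B n k u' w' \<le> t"
  shows "Sup (SS B n k) \<le> 2 * t"
proof -
  let ?M = "Sup (SS B n k)"
  have M0: "0 \<le> ?M" by (rule SS_nonneg)
  have "?M \<le> t + ?M / 2"
  proof (rule cSup_least)
    show "SS B n k \<noteq> {}" using SS_zero by blast
    fix s assume "s \<in> SS B n k"
    then obtain u w where s: "s = Q B n k u w" and u: "(\<Sum>i<n. (u i)\<^sup>2) \<le> 1" and w: "(\<Sum>j<k. (w j)\<^sup>2) \<le> 1"
      unfolding SS_def by blast
    obtain u' w' where e1: "(\<Sum>i<n. (u i - u' i)\<^sup>2) \<le> 1/36" and e2: "(\<Sum>i<n. (u' i)\<^sup>2) \<le> 4"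
      and e3: "(\<Sum>j<k. (w j - w' j)\<^sup>2) \<le> 1/36" and e4: "Q B n k u' w' \<le> t"
      using net[OF u w] by blast
    have n1: "nrm n (\<lambda>i. u i - u' i) \<le> 1/6" using e1 by (intro nrm_le) (auto simp: power2_eq_square)
    have n2: "nrm n u' \<le> 2" using e2 by (intro nrm_le) (auto simp: power2_eq_square)
    have n3: "nrm k (\<lambda>j. w j - w' j) \<le> 1/6" using e3 by (intro nrm_le) (auto simp: power2_eq_square)
    have n4: "nrm k w \<le> 1" using w by (intro nrm_le) auto
    have nn: "0 \<le> nrm k w" "0 \<le> nrm n u'" "0 \<le> nrm n (\<lambda>i. u i - u' i)" "0 \<le> nrm k (\<lambda>j. w j - w' j)"
      by (auto simp: nrm_def intro!: sum_nonneg)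
    have "Q B n k u w = Q B n k u' w' + Q B n k (\<lambda>i. u i - u' i) w + Q B n k u' (\<lambda>j. w j - w' j)"
      by (simp add: Q_diff_left Q_diff_right)
    also have "\<dots> \<le> t + ?M * nrm n (\<lambda>i. u i - u' i) * nrm k w + ?M * nrm n u' * nrm k (\<lambda>j. w j - w' j)"
      using e4 Q_hom[of B n k "\<lambda>i. u i - u' i" w] Q_hom[of B n k u' "\<lambda>j. w j - w' j"] by linarith
    also have "?M * nrm n (\<lambda>i. u i - u' i) * nrm k w \<le> ?M * (1/6) * 1"
      using M0 n1 n4 nn by (intro mult_mono) auto
    also have "?M * nrm n u' * nrm k (\<lambda>j. w j - w' j) \<le> ?M * 2 * (1/6)"
      using M0 n2 n3 nn by (intro mult_mono) auto
    finally show "s \<le> t + ?M / 2" using s by simp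
  qed
  then show ?thesis by simp
qed
lemma Q_matvec: "Q B n k (mat_vec B k z) z = (\<Sum>i<n. (mat_vec B k z i)\<^sup>2)"
  unfolding Q_def power2_eq_square
  by (intro sum.cong refl) (simp add: mat_vec_def sum_distrib_left algebra_simps)

lemma det_unit:
  assumes z: "(\<Sum>j<k. (z j)\<^sup>2) = 1"
  shows "(\<Sum>i<n. (mat_vec B k z i)\<^sup>2) \<le> (Sup (SS B n k))\<^sup>2"
proof -
  let ?M = "Sup (SS B n k)"
  let ?s = "(\<Sum>i<n. (mat_vec B k z i)\<^sup>2)"
  have M0: "0 \<le> ?M" by (rule SS_nonneg)
  have s0: "0 \<le> ?s" by (intro sum_nonneg) auto
  have "?s \<le> ?M * sqrt ?s * 1"
    using Q_hom[of B n k "mat_vec B k z" z] z by (simp add: Q_matvec nrm_def)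
  then have "sqrt ?s * sqrt ?s \<le> ?M * sqrt ?s" using s0 by simp
  then have "sqrt ?s \<le> ?M"
  proof (cases "sqrt ?s = 0")
    case False
    then have "sqrt ?s > 0" using s0 by simp
    then show ?thesis using \<open>sqrt ?s * sqrt ?s \<le> ?M * sqrt ?s\<close> by (rule mult_right_le_imp_le[rotated])
  qed (use M0 in simp)
  then have "(sqrt ?s)\<^sup>2 \<le> ?M\<^sup>2" using s0 by (intro power_mono) auto
  then show ?thesis using s0 by simp
qed


fun LL :: "nat \<Rightarrow> nat \<Rightarrow> int list set" where
  "LL 0 R = {[]}"
| "LL (Suc d) R = (\<Union>a\<in>{..R}. \<Union>s\<in>{1,-1::int}. (\<lambda>l. s * int a # l) ` LL d (R - a))"

lemma LL_finite: "finite (LL d R)"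
  by (induction d arbitrary: R) auto

lemma geom2: "(\<Sum>a\<le>R. (2::nat) ^ (R - a)) < 2 ^ Suc R"
proof -
  have "(\<Sum>a\<le>R. (2::nat) ^ (R - a)) = (\<Sum>a\<le>R. 2 ^ a)"
    by (rule sum.reindex_bij_witness[of _ "\<lambda>a. R - a" "\<lambda>a. R - a"]) auto
  also have "\<dots> = (\<Sum>a=0..<Suc R. 2 ^ a)" by (simp add: atLeast0LessThan lessThan_Suc_atMost)
  also have "\<dots> = 2 ^ Suc R - 1" by (rule sum_power2)
  finally show ?thesis by simp
qed

lemma LL_card: "card (LL d R) \<le> 4 ^ d * 2 ^ R"
proof (induction d arbitrary: R)
  case 0 then show ?case by simp
next
  case (Suc d)
  have "card (LL (Suc d) R) \<le> (\<Sum>a\<le>R. card (\<Union>s\<in>{1,-1::int}. (\<lambda>l. s * int a # l) ` LL d (R - a)))"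
    by simp (rule card_UN_le, simp)
  also have "\<dots> \<le> (\<Sum>a\<le>R. 2 * (4 ^ d * 2 ^ (R - a)))"
  proof (rule sum_mono)
    fix a
    have "card (\<Union>s\<in>{1,-1::int}. (\<lambda>l. s * int a # l) ` LL d (R - a))
       \<le> (\<Sum>s\<in>{1,-1::int}. card ((\<lambda>l. s * int a # l) ` LL d (R - a)))"
      by (rule card_UN_le) simp
    also have "\<dots> \<le> (\<Sum>s\<in>{1,-1::int}. 4 ^ d * 2 ^ (R - a))"
      by (intro sum_mono order_trans[OF card_image_le[OF LL_finite] Suc.IH])
    also have "\<dots> \<le> 2 * (4 ^ d * 2 ^ (R - a))" by (simp add: card_insert_if)
    finally show "card (\<Union>s\<in>{1,-1::int}. (\<lambda>l. s * int a # l) ` LL d (R - a)) \<le> 2 * (4 ^ d * 2 ^ (R - a))" .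
  qed
  also have "\<dots> = 2 * 4 ^ d * (\<Sum>a\<le>R. 2 ^ (R - a))" by (simp add: sum_distrib_left mult.assoc)
  also have "\<dots> \<le> 2 * 4 ^ d * 2 ^ Suc R" using geom2[of R] by (intro mult_left_mono) auto
  also have "\<dots> = 4 ^ Suc d * 2 ^ R" by simp
  finally show ?case .
qed

lemma LL_mem: "length l = d \<Longrightarrow> (\<Sum>i<d. nat \<bar>l ! i\<bar>) \<le> R \<Longrightarrow> l \<in> LL d R"
proof (induction d arbitrary: l R)
  case 0 then show ?case by simp
next
  case (Suc d)
  then obtain x l' where l: "l = x # l'" and len: "length l' = d" by (cases l) auto
  have "(\<Sum>i<Suc d. nat \<bar>l ! i\<bar>) = nat \<bar>x\<bar> + (\<Sum>i<d. nat \<bar>l' ! i\<bar>)"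
    unfolding l by (subst sum.lessThan_Suc_shift) simp
  then have sR: "(\<Sum>i<d. nat \<bar>l' ! i\<bar>) \<le> R - nat \<bar>x\<bar>" "nat \<bar>x\<bar> \<le> R" using Suc.prems by auto
  have "l' \<in> LL d (R - nat \<bar>x\<bar>)" using Suc.IH[OF len sR(1)] .
  then have "x # l' \<in> (\<lambda>l. (if x < 0 then -1 else 1) * int (nat \<bar>x\<bar>) # l) ` LL d (R - nat \<bar>x\<bar>)"
    by (intro image_eqI[of _ _ l']) auto
  then show ?case unfolding l LL.simps using sR(2)
    by (intro UN_I[of "nat \<bar>x\<bar>"] UN_I[of "if x < 0 then -1 else 1"]) auto
qed
definition vecl :: "nat \<Rightarrow> int list \<Rightarrow> nat \<Rightarrow> real" where
  "vecl d l i = (1 / (6 * sqrt d)) * of_int (l ! i)"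

lemma round_net:
  assumes u: "(\<Sum>i<d. (u i)\<^sup>2) \<le> 1"
  shows "\<exists>l \<in> LL d (7*d). (\<Sum>i<d. (u i - vecl d l i)\<^sup>2) \<le> 1/36 \<and> (\<Sum>i<d. (vecl d l i)\<^sup>2) \<le> 4"
proof (cases "d = 0")
  case True then show ?thesis by (intro bexI[of _ "[]"]) auto
next
  case False
  define \<delta> where "\<delta> = 1 / (6 * sqrt d)"
  have dpos: "\<delta> > 0" using False by (simp add: \<delta>_def)
  have sd: "(sqrt d)\<^sup>2 = d" by simp
  define l where "l = map (\<lambda>i. \<lfloor>u i / \<delta>\<rfloor>) [0..<d]"
  have li: "l ! i = \<lfloor>u i / \<delta>\<rfloor>" if "i < d" for i using that by (simp add: l_def)
  have vi: "vecl d l i = \<delta> * \<lfloor>u i / \<delta>\<rfloor>" if "i < d" for i using that by (simp add: vecl_def li \<delta>_def)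
  have err: "0 \<le> u i - vecl d l i \<and> u i - vecl d l i \<le> \<delta>" if "i < d" for i
  proof -
    have "of_int \<lfloor>u i / \<delta>\<rfloor> \<le> u i / \<delta>" "u i / \<delta> \<le> of_int \<lfloor>u i / \<delta>\<rfloor> + 1"
      by linarith+
    then have "\<delta> * of_int \<lfloor>u i / \<delta>\<rfloor> \<le> \<delta> * (u i / \<delta>)" "\<delta> * (u i / \<delta>) \<le> \<delta> * (of_int \<lfloor>u i / \<delta>\<rfloor> + 1)"
      using dpos by (intro mult_left_mono; simp)+
    then have "\<delta> * of_int \<lfloor>u i / \<delta>\<rfloor> \<le> u i" "u i \<le> \<delta> * of_int \<lfloor>u i / \<delta>\<rfloor> + \<delta>"
      using dpos by (auto simp: algebra_simps)
    then show ?thesis using vi[OF that] by simp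
  qed
  have e1: "(\<Sum>i<d. (u i - vecl d l i)\<^sup>2) \<le> 1/36"
  proof -
    have "(\<Sum>i<d. (u i - vecl d l i)\<^sup>2) \<le> (\<Sum>i<d. \<delta>\<^sup>2)"
      using err by (intro sum_mono power_mono) auto
    also have "\<dots> = d * \<delta>\<^sup>2" by simp
    also have "\<dots> = 1/36" using False by (simp add: \<delta>_def power_divide power_mult_distrib)
    finally show ?thesis .
  qed
  have e2: "(\<Sum>i<d. (vecl d l i)\<^sup>2) \<le> 4"
  proof -
    have "(\<Sum>i<d. (vecl d l i)\<^sup>2) \<le> (\<Sum>i<d. 2 * (u i)\<^sup>2 + 2 * (u i - vecl d l i)\<^sup>2)"
    proof (intro sum_mono)
      fix i
      have "0 \<le> (2 * u i - vecl d l i)\<^sup>2" by simp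
      then show "(vecl d l i)\<^sup>2 \<le> 2 * (u i)\<^sup>2 + 2 * (u i - vecl d l i)\<^sup>2"
        by (simp add: power2_eq_square algebra_simps)
    qed
    also have "\<dots> = 2 * (\<Sum>i<d. (u i)\<^sup>2) + 2 * (\<Sum>i<d. (u i - vecl d l i)\<^sup>2)"
      by (simp add: sum.distrib sum_distrib_left)
    also have "\<dots> \<le> 4" using u e1 by simp
    finally show ?thesis .
  qed
  have "(\<Sum>i<d. nat \<bar>l ! i\<bar>) \<le> 7 * d"
  proof -
    have b: "real (nat \<bar>l ! i\<bar>) \<le> 3 * d * (u i)\<^sup>2 + 4" if "i < d" for i
    proof -
      have "real (nat \<bar>l ! i\<bar>) = \<bar>of_int \<lfloor>u i / \<delta>\<rfloor>\<bar>" using li[OF that] by simp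
      also have "\<dots> \<le> \<bar>u i / \<delta>\<bar> + 1" by linarith
      also have "\<bar>u i / \<delta>\<bar> = 6 * (sqrt d * \<bar>u i\<bar>)" using False by (simp add: \<delta>_def abs_mult)
      also have "6 * (sqrt d * \<bar>u i\<bar>) \<le> 3 * (d * (u i)\<^sup>2 + 1)"
      proof -
        have "0 \<le> (sqrt d * \<bar>u i\<bar> - 1)\<^sup>2" by simp
        also have "\<dots> = (sqrt d)\<^sup>2 * (u i)\<^sup>2 - 2 * (sqrt d * \<bar>u i\<bar>) + 1"
          by (simp add: power2_eq_square algebra_simps)
        finally show ?thesis using sd by simp
      qed
      finally show ?thesis by (simp add: algebra_simps)
    qed
    have "real (\<Sum>i<d. nat \<bar>l ! i\<bar>) = (\<Sum>i<d. real (nat \<bar>l ! i\<bar>))" by simp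
    also have "\<dots> \<le> (\<Sum>i<d. 3 * d * (u i)\<^sup>2 + 4)" using b by (intro sum_mono) auto
    also have "\<dots> = 3 * d * (\<Sum>i<d. (u i)\<^sup>2) + 4 * d" by (simp add: sum.distrib sum_distrib_left)
    also have "\<dots> \<le> real (3 * d) * 1 + real (4 * d)" using u by (intro add_mono mult_left_mono) auto
    finally show ?thesis by linarith
  qed
  then have "l \<in> LL d (7*d)" by (intro LL_mem) (auto simp: l_def)
  then show ?thesis using e1 e2 by blast
qed


lemma id_meas: "(\<lambda>B. B) \<in> borel_measurable (gaussian_matrix n k)"
proof (rule measurable_coordinatewise_then_product)
  fix x :: "nat \<times> nat"
  show "(\<lambda>B. B x) \<in> borel_measurable (gaussian_matrix n k)"
  proof (cases "x \<in> {..<n} \<times> {..<k}")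
    case True
    then show ?thesis unfolding gaussian_matrix_def by measurable
  next
    case False
    have "(\<lambda>B. undefined :: real) \<in> borel_measurable (gaussian_matrix n k)" by simp
    moreover have "\<And>B. B \<in> space (gaussian_matrix n k) \<Longrightarrow> undefined = B x"
      using False unfolding gaussian_matrix_def by (cases x) (auto simp: space_PiM PiE_def extensional_def)
    ultimately show ?thesis by (rule measurable_cong[THEN iffD1, rotated])
  qed
qed

lemma cont_fst_coord: "continuous_on UNIV (\<lambda>x::('a::topological_space \<Rightarrow> 'b::topological_space) \<times> 'c::topological_space. fst x a)"
  by (rule continuous_on_compose2[OF continuous_on_product_coordinates continuous_on_fst]) auto
lemma cont_snd_coord: "continuous_on UNIV (\<lambda>x::'c::topological_space \<times> ('a::topological_space \<Rightarrow> 'b::topological_space). snd x a)"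
  by (rule continuous_on_compose2[OF continuous_on_product_coordinates continuous_on_snd]) auto

lemma sphere_compact: "compact (unit_sphere k)"
proof -
  let ?S = "\<lambda>j::nat. if j < k then {-1..1::real} else {0}"
  have c1: "compact (PiE UNIV ?S)"
  proof -
    have "compactin (product_topology (\<lambda>_. euclidean) UNIV) (PiE UNIV ?S)"
      by (subst compactin_PiE) auto
    then show ?thesis by (simp add: euclidean_product_topology)
  qed
  have c2: "closed {z::nat\<Rightarrow>real. (\<Sum>j<k. (z j)\<^sup>2) = 1}"
    by (intro closed_Collect_eq continuous_intros continuous_on_compose2[OF continuous_on_product_coordinates]) auto
  have "unit_sphere k = PiE UNIV ?S \<inter> {z. (\<Sum>j<k. (z j)\<^sup>2) = 1}"
  proof (intro set_eqI iffI)
    fix z assume z: "z \<in> unit_sphere k"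
    then have s: "(\<Sum>j<k. (z j)\<^sup>2) \<le> 1" by (simp add: unit_sphere_def)
    have "\<bar>z j\<bar> \<le> 1" if "j < k" for j
    proof -
      have "(z j)\<^sup>2 \<le> (\<Sum>j<k. (z j)\<^sup>2)" by (rule member_le_sum) (use that in auto)
      then have "(z j)\<^sup>2 \<le> 1" using s by simp
      then show ?thesis by (simp add: abs_square_le_1)
    qed
    then show "z \<in> PiE UNIV ?S \<inter> {z. (\<Sum>j<k. (z j)\<^sup>2) = 1}"
      using z by (auto simp: unit_sphere_def PiE_def abs_le_iff)
  next
    fix z assume "z \<in> PiE UNIV ?S \<inter> {z. (\<Sum>j<k. (z j)\<^sup>2) = 1}"
    then have zj: "z j \<in> ?S j" "(\<Sum>j<k. (z j)\<^sup>2) = 1" for j by (auto simp: PiE_def Pi_def)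
    have "z j = 0" if "k \<le> j" for j using zj(1)[of j] that by simp
    then show "z \<in> unit_sphere k" unfolding unit_sphere_def using zj(2) by simp
  qed
  then show ?thesis using c1 c2 by auto
qed

lemma U_open:
  fixes h :: "'a::topological_space \<Rightarrow> 'b::topological_space \<Rightarrow> real"
  assumes hc: "continuous_on UNIV (\<lambda>x. h (fst x) (snd x))" and K: "compact K"
  shows "open {B. \<forall>z\<in>K. h B z < c}"
proof -
  have W: "open {x. h (fst x) (snd x) < c}"
    by (rule open_Collect_less[OF hc continuous_on_const])
  show ?thesis
  proof (subst open_subopen, intro ballI)
    fix B0 assume "B0 \<in> {B. \<forall>z\<in>K. h B z < c}"
    then have "{B0} \<times> K \<subseteq> {x. h (fst x) (snd x) < c}" by auto
    from Elementary_Topology.tube_lemma[OF K W this] obtain X0 where X0: "B0 \<in> X0" "open X0" "X0 \<times> K \<subseteq> {x. h (fst x) (snd x) < c}"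
      by blast
    then have "X0 \<subseteq> {B. \<forall>z\<in>K. h B z < c}" by auto
    then show "\<exists>T. open T \<and> B0 \<in> T \<and> T \<subseteq> {B. \<forall>z\<in>K. h B z < c}" using X0 by blast
  qed
qed

definition hh where
  "hh k T \<sigma> p B z = (\<Sum>i\<in>T. (max 0 (-(\<sigma> i * mat_vec B k z i))) powr p)"

lemma hh_cont: "p > 0 \<Longrightarrow> continuous_on UNIV (\<lambda>x. hh k T \<sigma> p (fst x) (snd x))"
  unfolding hh_def mat_vec_def
  by (intro continuous_intros continuous_on_powr' cont_fst_coord cont_snd_coord) auto

lemma hh_eq:
  assumes "finite T" "\<forall>i\<in>T. \<sigma> i = -1 \<or> \<sigma> i = 1"
  shows "(\<Sum>i\<in>T_minus B k T \<sigma> z. \<bar>mat_vec B k z i\<bar> powr p) = hh k T \<sigma> p B z"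
  unfolding T_minus_def hh_def
proof (subst sum.inter_filter[OF assms(1)], intro sum.cong refl)
  fix i assume "i \<in> T"
  then have s: "\<sigma> i = -1 \<or> \<sigma> i = 1" using assms by auto
  show "(if mat_vec B k z i * \<sigma> i < 0 then \<bar>mat_vec B k z i\<bar> powr p else 0) =
        max 0 (- (\<sigma> i * mat_vec B k z i)) powr p"
    using s by (auto simp: max_def)
qed

lemma E_sets:
  assumes "p > 0" "finite T" "\<forall>i\<in>T. \<sigma> i = -1 \<or> \<sigma> i = 1"
  shows "{B \<in> space (gaussian_matrix n k). \<forall>z \<in> unit_sphere k.
            (\<Sum>i\<in>T_minus B k T \<sigma> z. \<bar>mat_vec B k z i\<bar> powr p) < c} \<in> sets (gaussian_matrix n k)"
proof -
  let ?U = "{B. \<forall>z\<in>unit_sphere k. hh k T \<sigma> p B z < c}"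
  have "open ?U" by (rule U_open[OF hh_cont[OF assms(1)] sphere_compact])
  then have "?U \<in> sets borel" by simp
  then have "(\<lambda>B. B) -` ?U \<inter> space (gaussian_matrix n k) \<in> sets (gaussian_matrix n k)"
    by (rule measurable_sets[OF id_meas])
  moreover have "(\<lambda>B. B) -` ?U \<inter> space (gaussian_matrix n k) = {B \<in> space (gaussian_matrix n k). \<forall>z \<in> unit_sphere k.
            (\<Sum>i\<in>T_minus B k T \<sigma> z. \<bar>mat_vec B k z i\<bar> powr p) < c}"
    using hh_eq[OF assms(2,3)] by auto
  ultimately show ?thesis by simp
qed
lemma Q_cart: "Q B n k u w = (\<Sum>x\<in>{..<n}\<times>{..<k}. (u (fst x) * w (snd x)) * B x)"
  unfolding Q_def sum.cartesian_product' by (intro sum.cong refl) (simp add: mult_ac)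
lemma sq_cart: fixes u w :: "nat \<Rightarrow> real" shows "(\<Sum>x\<in>{..<n}\<times>{..<k}. (u (fst x) * w (snd x))\<^sup>2) = (\<Sum>i<n. (u i)\<^sup>2) * (\<Sum>j<(k::nat). (w j)\<^sup>2)"
proof -
  have "(\<Sum>x\<in>{..<n}\<times>{..<k}. (u (fst x) * w (snd x))\<^sup>2) = (\<Sum>i<n. \<Sum>j<k. (u i)\<^sup>2 * (w j)\<^sup>2)"
    unfolding sum.cartesian_product' by (intro sum.cong refl) (simp add: power_mult_distrib)
  also have "\<dots> = (\<Sum>i<n. (u i)\<^sup>2) * (\<Sum>j<(k::nat). (w j)\<^sup>2)" by (rule sum_product[symmetric])
  finally show ?thesis .
qed
lemma powr_le_sq: "0 < p \<Longrightarrow> p \<le> 1 \<Longrightarrow> \<bar>x::real\<bar> powr p \<le> 1 + x\<^sup>2"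
proof (cases "\<bar>x\<bar> \<le> 1")
  case True
  assume "0 < p" "p \<le> 1"
  have "\<bar>x\<bar> powr p \<le> 1 powr p" using True \<open>0 < p\<close> by (intro powr_mono2) auto
  then have "\<bar>x\<bar> powr p \<le> 1" by simp
  moreover have "0 \<le> x\<^sup>2" by simp
  ultimately show ?thesis by linarith
next
  case False
  assume p: "0 < p" "p \<le> 1"
  then have "\<bar>x\<bar> powr p \<le> \<bar>x\<bar> powr 1" using False by (intro powr_mono) auto
  also have "\<dots> = \<bar>x\<bar>" using False by simp
  also have "\<bar>x\<bar> * 1 \<le> \<bar>x\<bar> * \<bar>x\<bar>" using False by (intro mult_left_mono) auto
  also have "\<bar>x\<bar> * \<bar>x\<bar> = x\<^sup>2" by (simp add: power2_eq_square abs_mult_self_eq)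
  finally show ?thesis by simp
qed

lemma bad_bound:
  assumes u: "(\<Sum>i<n. (u i)\<^sup>2) \<le> 4" and w: "(\<Sum>j<k. (w j)\<^sup>2) \<le> 4" and t: "t \<ge> 0"
  shows "measure (gaussian_matrix n k) {B \<in> space (gaussian_matrix n k). t \<le> Q B n k u w} \<le> exp (- t\<^sup>2 / 32)"
proof -
  interpret prob_space "gaussian_matrix n k" by (rule prob_G)
  let ?a = "\<lambda>x. u (fst x) * w (snd x)"
  have s: "(\<Sum>x\<in>{..<n}\<times>{..<k}. (?a x)\<^sup>2) = (\<Sum>i<n. (u i)\<^sup>2) * (\<Sum>j<k. (w j)\<^sup>2)"
    by (rule sq_cart)
  have s16: "(\<Sum>x\<in>{..<n}\<times>{..<k}. (?a x)\<^sup>2) \<le> 16"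
  proof -
    have "(\<Sum>i<n. (u i)\<^sup>2) * (\<Sum>j<k. (w j)\<^sup>2) \<le> 4 * 4"
      using u w by (intro mult_mono) (auto intro: sum_nonneg)
    then show ?thesis using s by simp
  qed
  have "emeasure (gaussian_matrix n k) {B \<in> space (gaussian_matrix n k). t \<le> Q B n k u w}
     \<le> ennreal (exp (- (t/16) * t + (t/16)\<^sup>2 * (\<Sum>x\<in>{..<n}\<times>{..<k}. (?a x)\<^sup>2) / 2))"
    using gauss_tail[where l = "t/16" and t = t and a = "?a" and n = n and k = k] t by (simp add: Q_cart)
  also have "\<dots> \<le> ennreal (exp (- t\<^sup>2 / 32))"
  proof -
    have "(t/16)\<^sup>2 * (\<Sum>x\<in>{..<n}\<times>{..<k}. (?a x)\<^sup>2) \<le> (t/16)\<^sup>2 * 16"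
      using s16 by (intro mult_left_mono) auto
    then have "- (t/16) * t + (t/16)\<^sup>2 * (\<Sum>x\<in>{..<n}\<times>{..<k}. (?a x)\<^sup>2) / 2 \<le> - t\<^sup>2 / 32"
      by (simp add: power2_eq_square field_simps)
    then show ?thesis by (intro ennreal_leI) simp
  qed
  finally show ?thesis by (simp add: emeasure_eq_measure ennreal_le_iff)
qed

lemma main_k:
  fixes n k :: nat and T :: "nat set" and \<sigma> :: "nat \<Rightarrow> real" and p :: real
  assumes n1: "1 \<le> n" and kn: "k \<le> n" and T: "T \<subseteq> {..<n}"
    and sig: "\<forall>i\<in>T. \<sigma> i = -1 \<or> \<sigma> i = 1" and p: "0 < p" "p \<le> 1"
  shows "1 - exp (- 1 * real n) \<le> measure (gaussian_matrix n k)
     {B \<in> space (gaussian_matrix n k). \<forall>z\<in>unit_sphere k.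
        (\<Sum>i\<in>T_minus B k T \<sigma> z. \<bar>mat_vec B k z i\<bar> powr p) < 2434 * real n}"
proof -
  let ?M = "gaussian_matrix n k"
  interpret prob_space ?M by (rule prob_G)
  define t where "t = sqrt (608 * real n)"
  have t0: "t \<ge> 0" and t2: "t\<^sup>2 = 608 * real n" by (auto simp: t_def)
  define NU where "NU = vecl n ` {l \<in> LL n (7*n). (\<Sum>i<n. (vecl n l i)\<^sup>2) \<le> 4}"
  define NW where "NW = vecl k ` {l \<in> LL k (7*k). (\<Sum>j<k. (vecl k l j)\<^sup>2) \<le> 4}"
  define Bad where "Bad = (\<lambda>x. {B \<in> space ?M. t \<le> Q B n k (fst x) (snd x)})"
  define G where "G = space ?M - (\<Union>x\<in>NU\<times>NW. Bad x)"
  let ?E = "{B \<in> space ?M. \<forall>z\<in>unit_sphere k.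
        (\<Sum>i\<in>T_minus B k T \<sigma> z. \<bar>mat_vec B k z i\<bar> powr p) < 2434 * real n}"
  have finNU: "finite NU" unfolding NU_def by (rule finite_imageI) (rule finite_subset[OF _ LL_finite], auto)
  have finNW: "finite NW" unfolding NW_def by (rule finite_imageI) (rule finite_subset[OF _ LL_finite], auto)
  have cNU: "card NU \<le> 2 ^ (9 * n)"
  proof -
    have "card NU \<le> card {l \<in> LL n (7*n). (\<Sum>i<n. (vecl n l i)\<^sup>2) \<le> 4}"
      unfolding NU_def by (rule card_image_le) (rule finite_subset[OF _ LL_finite], auto)
    also have "\<dots> \<le> card (LL n (7*n))" by (rule card_mono[OF LL_finite]) auto
    also have "\<dots> \<le> 4 ^ n * 2 ^ (7 * n)" by (rule LL_card)
    also have "\<dots> = 2 ^ (2 * n) * 2 ^ (7 * n)" by (simp add: power_mult)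
    also have "\<dots> = 2 ^ (9 * n)" by (simp add: power_add[symmetric])
    finally show ?thesis .
  qed
  have cNW: "card NW \<le> 2 ^ (9 * n)"
  proof -
    have "card NW \<le> card {l \<in> LL k (7*k). (\<Sum>j<k. (vecl k l j)\<^sup>2) \<le> 4}"
      unfolding NW_def by (rule card_image_le) (rule finite_subset[OF _ LL_finite], auto)
    also have "\<dots> \<le> card (LL k (7*k))" by (rule card_mono[OF LL_finite]) auto
    also have "\<dots> \<le> 4 ^ k * 2 ^ (7 * k)" by (rule LL_card)
    also have "\<dots> = 2 ^ (2 * k) * 2 ^ (7 * k)" by (simp add: power_mult)
    also have "\<dots> = 2 ^ (9 * k)" by (simp add: power_add[symmetric])
    also have "\<dots> \<le> 2 ^ (9 * n)" using kn by (intro power_increasing) auto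
    finally show ?thesis .
  qed
  have Bad_sets: "Bad x \<in> sets ?M" for x
    unfolding Bad_def Q_def gaussian_matrix_def by measurable
  have Bad_bound: "measure ?M (Bad x) \<le> exp (- 19 * real n)" if "x \<in> NU \<times> NW" for x
  proof -
    from that obtain l1 l2 where x: "x = (vecl n l1, vecl k l2)"
      and l1: "(\<Sum>i<n. (vecl n l1 i)\<^sup>2) \<le> 4" and l2: "(\<Sum>j<k. (vecl k l2 j)\<^sup>2) \<le> 4"
      unfolding NU_def NW_def by auto
    have "measure ?M (Bad x) \<le> exp (- t\<^sup>2 / 32)"
      unfolding Bad_def x using bad_bound[OF l1 l2 t0] by simp
    also have "- t\<^sup>2 / 32 = - 19 * real n" using t2 by simp
    finally show ?thesis .
  qed
  have "measure ?M (\<Union>x\<in>NU\<times>NW. Bad x) \<le> (\<Sum>x\<in>NU\<times>NW. measure ?M (Bad x))"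
    using finNU finNW Bad_sets by (intro finite_measure_subadditive_finite) auto
  also have "\<dots> \<le> (\<Sum>x\<in>NU\<times>NW. exp (- 19 * real n))" by (intro sum_mono Bad_bound)
  also have "\<dots> = real (card NU) * real (card NW) * exp (- 19 * real n)" by (simp add: card_cartesian_product)
  also have "\<dots> \<le> 2 ^ (9 * n) * 2 ^ (9 * n) * exp (- 19 * real n)"
  proof -
    have "real (card NU) \<le> 2 ^ (9 * n)" "real (card NW) \<le> 2 ^ (9 * n)"
      using cNU cNW by (metis of_nat_le_iff of_nat_numeral of_nat_power)+
    then show ?thesis by (intro mult_right_mono mult_mono) auto
  qed
  also have "\<dots> \<le> exp (9 * real n) * exp (9 * real n) * exp (- 19 * real n)"
  proof -
    have "(2::real) ^ (9 * n) \<le> exp 1 ^ (9 * n)"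
      using exp_ge_add_one_self[of 1] by (intro power_mono) auto
    also have "\<dots> = exp (9 * real n)" by (simp add: exp_of_nat_mult[symmetric])
    finally show ?thesis by (intro mult_right_mono mult_mono) auto
  qed
  also have "\<dots> = exp (- 1 * real n)" by (simp add: exp_add[symmetric])
  finally have Ubound: "measure ?M (\<Union>x\<in>NU\<times>NW. Bad x) \<le> exp (- 1 * real n)" .
  have Usets: "(\<Union>x\<in>NU\<times>NW. Bad x) \<in> sets ?M"
    using finNU finNW Bad_sets by (intro sets.finite_UN) auto
  have Gm: "measure ?M G \<ge> 1 - exp (- 1 * real n)"
    unfolding G_def using prob_compl[OF Usets] Ubound by simp
  have GE: "G \<subseteq> ?E"
  proof
    fix B assume BG: "B \<in> G"
    then have Bs: "B \<in> space ?M" by (simp add: G_def)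
    have QB: "Q B n k u w < t" if "u \<in> NU" "w \<in> NW" for u w
      using BG that unfolding G_def Bad_def by force
    have Sup: "Sup (SS B n k) \<le> 2 * t"
    proof (rule det_main[OF t0])
      fix u w :: "nat \<Rightarrow> real"
      assume u: "(\<Sum>i<n. (u i)\<^sup>2) \<le> 1" and w: "(\<Sum>j<k. (w j)\<^sup>2) \<le> 1"
      obtain l1 where l1: "l1 \<in> LL n (7*n)" "(\<Sum>i<n. (u i - vecl n l1 i)\<^sup>2) \<le> 1/36" "(\<Sum>i<n. (vecl n l1 i)\<^sup>2) \<le> 4"
        using round_net[OF u] by blast
      obtain l2 where l2: "l2 \<in> LL k (7*k)" "(\<Sum>j<k. (w j - vecl k l2 j)\<^sup>2) \<le> 1/36" "(\<Sum>j<k. (vecl k l2 j)\<^sup>2) \<le> 4"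
        using round_net[OF w] by blast
      have "vecl n l1 \<in> NU" "vecl k l2 \<in> NW" unfolding NU_def NW_def using l1 l2 by auto
      then have "Q B n k (vecl n l1) (vecl k l2) \<le> t" using QB by (simp add: less_imp_le)
      then show "\<exists>u' w'. (\<Sum>i<n. (u i - u' i)\<^sup>2) \<le> 1/36 \<and> (\<Sum>i<n. (u' i)\<^sup>2) \<le> 4 \<and>
             (\<Sum>j<k. (w j - w' j)\<^sup>2) \<le> 1/36 \<and> Q B n k u' w' \<le> t"
        using l1 l2 by blast
    qed
    have "\<forall>z\<in>unit_sphere k. (\<Sum>i\<in>T_minus B k T \<sigma> z. \<bar>mat_vec B k z i\<bar> powr p) < 2434 * real n"
    proof
      fix z assume "z \<in> unit_sphere k"
      then have z: "(\<Sum>j<k. (z j)\<^sup>2) = 1" by (simp add: unit_sphere_def)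
      have sq: "(\<Sum>i<n. (mat_vec B k z i)\<^sup>2) \<le> 2432 * real n"
      proof -
        have "(\<Sum>i<n. (mat_vec B k z i)\<^sup>2) \<le> (Sup (SS B n k))\<^sup>2" by (rule det_unit[OF z])
        also have "\<dots> \<le> (2 * t)\<^sup>2" using Sup SS_nonneg by (intro power_mono) auto
        also have "\<dots> = 2432 * real n" using t2 by (simp add: power_mult_distrib)
        finally show ?thesis .
      qed
      have Tm: "T_minus B k T \<sigma> z \<subseteq> {..<n}" using T by (auto simp: T_minus_def)
      have "(\<Sum>i\<in>T_minus B k T \<sigma> z. \<bar>mat_vec B k z i\<bar> powr p) \<le> (\<Sum>i\<in>T_minus B k T \<sigma> z. 1 + (mat_vec B k z i)\<^sup>2)"
        by (intro sum_mono powr_le_sq p)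
      also have "\<dots> \<le> (\<Sum>i<n. 1 + (mat_vec B k z i)\<^sup>2)"
        by (intro sum_mono2 Tm) (auto intro: add_nonneg_nonneg)
      also have "\<dots> = real n + (\<Sum>i<n. (mat_vec B k z i)\<^sup>2)" by (simp add: sum.distrib)
      also have "\<dots> < 2434 * real n" using sq n1 by simp
      finally show "(\<Sum>i\<in>T_minus B k T \<sigma> z. \<bar>mat_vec B k z i\<bar> powr p) < 2434 * real n" .
    qed
    then show "B \<in> ?E" using Bs by simp
  qed
  have Esets: "?E \<in> sets ?M"
    by (rule E_sets[OF p(1) finite_subset[OF T] sig]) simp
  have "measure ?M G \<le> measure ?M ?E" by (rule finite_measure_mono[OF GE Esets])
  then show ?thesis using Gm by linarith
qed

theorem lemma9:
  fixes \<alpha> p \<rho> :: real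
  assumes "0 < \<alpha>" "\<alpha> < 1" "0 < p" "p \<le> 1" "0 < \<rho>" "\<rho> < 1"
  shows "\<exists>lam_max > 0. \<exists>c15 > 0. \<exists>N. \<forall>n \<ge> N.
     \<forall>T \<sigma>. T \<subseteq> {..<n} \<longrightarrow> card T = nat \<lfloor>\<rho> * real n\<rfloor> \<longrightarrow>
       (\<forall>i\<in>T. \<sigma> i = -1 \<or> \<sigma> i = 1) \<longrightarrow>
       (let m = nat \<lfloor>\<alpha> * real n\<rfloor>; k = n - m in
        measure (gaussian_matrix n k)
          {B \<in> space (gaussian_matrix n k).
             \<forall>z \<in> unit_sphere k.
               (\<Sum>i\<in>T_minus B k T \<sigma> z. \<bar>mat_vec B k z i\<bar> powr p) < \<rho> * lam_max * real n}
        \<ge> 1 - exp (- c15 * real n))"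
proof -
  have lam: "2434 / \<rho> > 0" using assms by simp
  have eq: "\<rho> * (2434 / \<rho>) * real n = 2434 * real n" for n using assms by simp
  show ?thesis
  proof (rule exI[of _ "2434 / \<rho>"], rule conjI[OF lam], rule exI[of _ "1::real"], rule conjI[OF zero_less_one],
         rule exI[of _ "1::nat"], intro allI impI)
    fix n :: nat and T :: "nat set" and \<sigma> :: "nat \<Rightarrow> real"
    assume "1 \<le> n" "T \<subseteq> {..<n}" "card T = nat \<lfloor>\<rho> * real n\<rfloor>" "\<forall>i\<in>T. \<sigma> i = -1 \<or> \<sigma> i = 1"
    then show "let m = nat \<lfloor>\<alpha> * real n\<rfloor>; k = n - m in
        measure (gaussian_matrix n k)
          {B \<in> space (gaussian_matrix n k).
             \<forall>z \<in> unit_sphere k.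
               (\<Sum>i\<in>T_minus B k T \<sigma> z. \<bar>mat_vec B k z i\<bar> powr p) < \<rho> * (2434 / \<rho>) * real n}
        \<ge> 1 - exp (- 1 * real n)"
      unfolding Let_def eq using main_k[of n "n - nat \<lfloor>\<alpha> * real n\<rfloor>" T \<sigma> p] assms by simp
  qed
qed

end
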